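(* There exists $C=C(\dim G)$ such that the following holds. Let $\eta>0$, let $B\subseteq B_1^U$ be a ball of Lebesgue measure at least $\eta$, let $\rho>0$, $t\in\mathbb R$ and $v\in Ge_1$. Then $$\bigl|\{\mathbf s\in B:\|a_tu_{\mathbf s}v\|\le e^t\eta^2\rho^2\|v\|\}\bigr|\le C\rho\,|B|.$$
   Context: Fix $n\ge3$. $G=\mathrm{SO}^\circ(n,1)$ (identity component of determinant-one matrices preserving $Q_0(x)=2x_1x_{n+1}-\sum_{k=2}^nx_k^2$) acting linearly on $\mathbb R^{n+1}$ with Euclidean norm; $e_1$ is the first standard basis vector. $a_t=\mathrm{diag}(e^t,1,\dots,1,e^{-t})$; $u_{\mathbf s}=n(\mathbf s,0)$ with $n(\mathbf s,r)=\begin{pmatrix}1&(\mathbf s,r)&\frac12\|(\mathbf s,r)\|^2\\0&I_{n-1}&(\mathbf s,r)^T\\0&0&1\end{pmatrix}$. $B_1^U=\{\mathbf s\in\mathbb R^{n-2}:\|\mathbf s\|\le1\}$ with Lebesgue measure $|\cdot|$ normalized so $|B_1^U|=1$. *)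

theory Defs
  imports "HOL-Analysis.Analysis" "HOL-Combinatorics.Permutations"
begin

text \<open>Vectors in R^(n+1) are functions nat => real; the coordinates
  x_1,...,x_(n+1) of the paper are the values at indices 0,...,n.
  (n+1)x(n+1) matrices are functions nat => nat => real whose entries
  vanish outside {0..n} x {0..n}; they carry the product topology
  (entrywise convergence).  Vectors s in R^(n-2) are elements of
  PiE {..<n-2} (\<lambda>_. UNIV) (coordinates s_1..s_(n-2) at indices 0..n-3),
  with Lebesgue measure the product measure of lborel.\<close>

definition mat_supp :: "nat \<Rightarrow> (nat \<Rightarrow> nat \<Rightarrow> real) \<Rightarrow> bool" where
  "mat_supp n g \<longleftrightarrow> (\<forall>i j. g i j \<noteq> 0 \<longrightarrow> i \<le> n \<and> j \<le> n)"

definition idm :: "nat \<Rightarrow> nat \<Rightarrow> nat \<Rightarrow> real" where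
  "idm n = (\<lambda>i j. if i = j \<and> i \<le> n then 1 else 0)"

definition detm :: "nat \<Rightarrow> (nat \<Rightarrow> nat \<Rightarrow> real) \<Rightarrow> real" where
  "detm m A = (\<Sum>p | p permutes {..<m}. of_int (sign p) * (\<Prod>i<m. A i (p i)))"

definition mv :: "nat \<Rightarrow> (nat \<Rightarrow> nat \<Rightarrow> real) \<Rightarrow> (nat \<Rightarrow> real) \<Rightarrow> (nat \<Rightarrow> real)" where
  "mv n g x = (\<lambda>i. if i \<le> n then (\<Sum>j\<le>n. g i j * x j) else 0)"

definition vnorm :: "nat \<Rightarrow> (nat \<Rightarrow> real) \<Rightarrow> real" where
  "vnorm n x = sqrt (\<Sum>i\<le>n. (x i)\<^sup>2)"

definition Q0 :: "nat \<Rightarrow> (nat \<Rightarrow> real) \<Rightarrow> real" where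
  "Q0 n x = 2 * x 0 * x n - (\<Sum>k\<in>{1..n-1}. (x k)\<^sup>2)"

definition SOQ :: "nat \<Rightarrow> (nat \<Rightarrow> nat \<Rightarrow> real) set" where
  "SOQ n = {g. mat_supp n g \<and> detm (n+1) g = 1 \<and> (\<forall>x. Q0 n (mv n g x) = Q0 n x)}"

definition Gn :: "nat \<Rightarrow> (nat \<Rightarrow> nat \<Rightarrow> real) set" where
  "Gn n = connected_component_set (SOQ n) (idm n)"

definition e1 :: "nat \<Rightarrow> real" where
  "e1 = (\<lambda>i. if i = 0 then 1 else 0)"

definition orbit_e1 :: "nat \<Rightarrow> (nat \<Rightarrow> real) set" where
  "orbit_e1 n = (\<lambda>g. mv n g e1) ` Gn n"

definition a_t :: "nat \<Rightarrow> real \<Rightarrow> nat \<Rightarrow> nat \<Rightarrow> real" where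
  "a_t n t = (\<lambda>i j. if i = j \<and> i \<le> n then
                     (if i = 0 then exp t else if i = n then exp (- t) else 1) else 0)"

text \<open>n(w) for w in R^(n-1), w given by its entries w_1..w_(n-1) at indices 1..n-1.\<close>
definition n_mat :: "nat \<Rightarrow> (nat \<Rightarrow> real) \<Rightarrow> nat \<Rightarrow> nat \<Rightarrow> real" where
  "n_mat n w = (\<lambda>i j.
     if i = 0 \<and> j = 0 then 1
     else if i = 0 \<and> 1 \<le> j \<and> j \<le> n - 1 then w j
     else if i = 0 \<and> j = n then (\<Sum>k\<in>{1..n-1}. (w k)\<^sup>2) / 2
     else if 1 \<le> i \<and> i \<le> n - 1 \<and> j = i then 1
     else if 1 \<le> i \<and> i \<le> n - 1 \<and> j = n then w i
     else if i = n \<and> j = n then 1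
     else 0)"

definition u_s :: "nat \<Rightarrow> (nat \<Rightarrow> real) \<Rightarrow> nat \<Rightarrow> nat \<Rightarrow> real" where
  "u_s n s = n_mat n (\<lambda>j. if 1 \<le> j \<and> j \<le> n - 2 then s (j - 1) else 0)"

definition mm :: "nat \<Rightarrow> (nat \<Rightarrow> nat \<Rightarrow> real) \<Rightarrow> (nat \<Rightarrow> nat \<Rightarrow> real) \<Rightarrow> nat \<Rightarrow> nat \<Rightarrow> real" where
  "mm n A B = (\<lambda>i j. if i \<le> n \<and> j \<le> n then (\<Sum>k\<le>n. A i k * B k j) else 0)"

definition lebU :: "nat \<Rightarrow> (nat \<Rightarrow> real) measure" where
  "lebU n = PiM {..<n-2} (\<lambda>_. lborel)"

definition ballU :: "nat \<Rightarrow> (nat \<Rightarrow> real) \<Rightarrow> real \<Rightarrow> (nat \<Rightarrow> real) set" where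
  "ballU n c r = {s \<in> PiE {..<n-2} (\<lambda>_. UNIV). sqrt (\<Sum>i<n-2. (s i - c i)\<^sup>2) \<le> r}"

definition B1U :: "nat \<Rightarrow> (nat \<Rightarrow> real) set" where
  "B1U n = ballU n (\<lambda>_. 0) 1"

definition volU :: "nat \<Rightarrow> (nat \<Rightarrow> real) set \<Rightarrow> real" where
  "volU n A = measure (lebU n) A / measure (lebU n) (B1U n)"

end

theory Submission
  imports Defs
begin

lemma cube_meas:
  assumes "r \<ge> 0"
  shows "emeasure (lebU n) (PiE {..<n-2} (\<lambda>i. {a i - r .. a i + r})) = ennreal ((2*r)^(n-2))"
proof -
  interpret product_sigma_finite "\<lambda>_::nat. lborel :: real measure" by standard
  have "emeasure (lebU n) (PiE {..<n-2} (\<lambda>i. {a i - r .. a i + r}))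
     = (\<Prod>i\<in>{..<n-2}. emeasure lborel {a i - r .. a i + r})"
    unfolding lebU_def by (rule emeasure_PiM) auto
  also have "\<dots> = (\<Prod>i\<in>{..<n-2}. ennreal (2*r))" using assms by (intro prod.cong) auto
  also have "\<dots> = ennreal ((2*r)^(n-2))" using assms by (simp add: ennreal_power power_mult_distrib)
  finally show ?thesis .
qed

lemma cube_sets: "PiE {..<n-2} (\<lambda>i. {a i - r .. a i + r}) \<in> sets (lebU n)"
  unfolding lebU_def by (rule sets_PiM_I_finite) auto

lemma ballU_sets: "ballU n c r \<in> sets (lebU n)"
proof -
  have "ballU n c r = {s \<in> space (lebU n). sqrt (\<Sum>i<n-2. (s i - c i)\<^sup>2) \<le> r}"
    unfolding ballU_def lebU_def by (simp add: space_PiM)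
  also have "\<dots> \<in> sets (lebU n)" unfolding lebU_def by measurable
  finally show ?thesis .
qed

lemma measure_le_sub:
  assumes "S \<subseteq> T" "T \<in> fmeasurable M"
  shows "measure M S \<le> measure M T"
proof (cases "S \<in> sets M")
  case True thus ?thesis using assms measure_mono_fmeasurable by blast
next
  case False thus ?thesis by (simp add: measure_notin_sets)
qed

lemma comp0:
  assumes "n \<ge> 3"
  shows "mv n (mm n (a_t n t) (u_s n s)) v 0 = exp t * (v 0 + (\<Sum>i<n-2. s i * v (Suc i)) + (\<Sum>i<n-2. (s i)\<^sup>2) / 2 * v n)"
proof -
  define d where "d = n - 2"
  have n: "n = Suc (Suc d)" using assms unfolding d_def by simp
  have mm0: "mm n (a_t n t) (u_s n s) 0 j = exp t * u_s n s 0 j" if "j \<le> n" for j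
  proof -
    have "(\<Sum>k\<le>n. a_t n t 0 k * u_s n s k j) = (\<Sum>k\<in>{0}. a_t n t 0 k * u_s n s k j)"
      by (rule sum.mono_neutral_right) (auto simp: a_t_def)
    thus ?thesis using that by (simp add: mm_def a_t_def)
  qed
  have 1: "mv n (mm n (a_t n t) (u_s n s)) v 0 = (\<Sum>j\<le>n. exp t * u_s n s 0 j * v j)"
  proof -
    have "mv n (mm n (a_t n t) (u_s n s)) v 0 = (\<Sum>j\<le>n. mm n (a_t n t) (u_s n s) 0 j * v j)"
      by (simp add: mv_def)
    also have "\<dots> = (\<Sum>j\<le>n. exp t * u_s n s 0 j * v j)"
      by (rule sum.cong) (simp_all add: mm0)
    finally show ?thesis .
  qed
  have 2: "(\<Sum>j\<le>n. u_s n s 0 j * v j) = (v 0 + (\<Sum>i<n-2. s i * v (Suc i)) + (\<Sum>i<n-2. (s i)\<^sup>2) / 2 * v n)"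
  proof -
    have w: "(\<Sum>k\<in>{1..n-1}. (if 1 \<le> k \<and> k \<le> n - 2 then s (k - 1) else 0)\<^sup>2) = (\<Sum>i<d. (s i)\<^sup>2)"
    proof -
      have e: "{1..n-1} = Suc ` {..<d} \<union> {Suc d}"
      proof (rule set_eqI)
        fix k show "k \<in> {1..n-1} \<longleftrightarrow> k \<in> Suc ` {..<d} \<union> {Suc d}"
          using n by (cases k) auto
      qed
      have "(\<Sum>k\<in>{1..n-1}. (if 1 \<le> k \<and> k \<le> n - 2 then s (k - 1) else 0)\<^sup>2)
          = (\<Sum>k\<in>Suc ` {..<d}. (if 1 \<le> k \<and> k \<le> n - 2 then s (k - 1) else 0)\<^sup>2)"
        unfolding e by (subst sum.union_disjoint) (auto simp: n)
      also have "\<dots> = (\<Sum>i<d. (s i)\<^sup>2)" by (subst sum.reindex) (auto simp: n)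
      finally show ?thesis .
    qed
    have "(\<Sum>j\<le>n. u_s n s 0 j * v j) = (\<Sum>j\<le>d. u_s n s 0 j * v j) + u_s n s 0 (Suc d) * v (Suc d) + u_s n s 0 n * v n"
      unfolding n by simp
    also have "(\<Sum>j\<le>d. u_s n s 0 j * v j) = u_s n s 0 0 * v 0 + (\<Sum>i<d. u_s n s 0 (Suc i) * v (Suc i))"
      by (simp add: sum.atMost_shift)
    also have "(\<Sum>i<d. u_s n s 0 (Suc i) * v (Suc i)) = (\<Sum>i<d. s i * v (Suc i))"
      by (intro sum.cong) (auto simp: u_s_def n_mat_def n)
    also have "u_s n s 0 0 = 1" by (simp add: u_s_def n_mat_def)
    also have "u_s n s 0 (Suc d) = 0" by (simp add: u_s_def n_mat_def n)
    also have "u_s n s 0 n = (\<Sum>i<d. (s i)\<^sup>2) / 2"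
      unfolding u_s_def n_mat_def using w n by simp
    finally show ?thesis unfolding d_def by simp
  qed
  show ?thesis unfolding 1 2[symmetric] by (simp add: sum_distrib_left mult.assoc)
qed

lemma comp0_le: "\<bar>x 0\<bar> \<le> vnorm n x"
proof -
  have "(x 0)\<^sup>2 \<le> (\<Sum>i\<le>n. (x i)\<^sup>2)"
    by (rule member_le_sum[where f="\<lambda>i. (x i)\<^sup>2"]) auto
  hence "sqrt ((x 0)\<^sup>2) \<le> sqrt (\<Sum>i\<le>n. (x i)\<^sup>2)" by (rule real_sqrt_le_mono)
  thus ?thesis unfolding vnorm_def by simp
qed

lemma orbit_Q0:
  assumes "v \<in> orbit_e1 n" "n \<ge> 1"
  shows "Q0 n v = 0"
proof -
  obtain g where g: "g \<in> Gn n" and v: "v = mv n g e1" using assms unfolding orbit_e1_def by auto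
  have "g \<in> SOQ n" using g unfolding Gn_def using connected_component_subset by blast
  hence "Q0 n v = Q0 n e1" unfolding v SOQ_def by auto
  also have "\<dots> = 0" using assms(2) unfolding Q0_def e1_def by simp
  finally show ?thesis .
qed

lemma orbit_nz:
  assumes "v \<in> orbit_e1 n"
  shows "\<exists>i\<le>n. v i \<noteq> 0"
proof (rule ccontr)
  assume H: "\<not> (\<exists>i\<le>n. v i \<noteq> 0)"
  obtain g where g: "g \<in> Gn n" and v: "v = mv n g e1" using assms unfolding orbit_e1_def by auto
  have "g \<in> SOQ n" using g unfolding Gn_def using connected_component_subset by blast
  hence det: "detm (n+1) g = 1" unfolding SOQ_def by auto
  have col: "g i 0 = 0" if "i \<le> n" for i
  proof -
    have "v i = (\<Sum>j\<le>n. g i j * e1 j)" using that v by (simp add: mv_def)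
    also have "\<dots> = (\<Sum>j\<in>{0}. g i j * e1 j)"
      by (rule sum.mono_neutral_right) (auto simp: e1_def)
    also have "\<dots> = g i 0" by (simp add: e1_def)
    finally show ?thesis using H that by simp
  qed
  have "(\<Prod>i<n+1. g i (p i)) = 0" if p: "p permutes {..<n+1}" for p
  proof -
    have "0 \<in> p ` {..<n+1}" using permutes_image[OF p] by simp
    then obtain i where i: "i < n+1" "p i = 0" by auto
    show ?thesis using i col[of i] by (intro prod_zero) (auto intro!: bexI[of _ i])
  qed
  hence "detm (n+1) g = 0" unfolding detm_def by (intro sum.neutral) (simp del: prod.lessThan_Suc)
  with det show False by simp
qed

lemma vnorm_pos:
  assumes "\<exists>i\<le>n. v i \<noteq> 0"
  shows "vnorm n v > 0"
proof -
  obtain i where i: "i \<le> n" "v i \<noteq> 0" using assms by auto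
  have "0 < (v i)\<^sup>2" using i by simp
  also have "(v i)\<^sup>2 \<le> (\<Sum>j\<le>n. (v j)\<^sup>2)"
    by (rule member_le_sum[where f="\<lambda>j. (v j)\<^sup>2"]) (use i in auto)
  finally show ?thesis unfolding vnorm_def by simp
qed

lemma vnorm_sq: "(vnorm n v)\<^sup>2 = (\<Sum>i\<le>n. (v i)\<^sup>2)"
  unfolding vnorm_def by (simp add: sum_nonneg)

lemma sum_split:
  assumes "n = Suc (Suc d)"
  shows "(\<Sum>i\<le>n. f i) = f 0 + (\<Sum>i<d. f (Suc i)) + f (Suc d) + f n"
  using assms by (simp add: sum.atMost_shift add.assoc)

lemma Q0_split:
  assumes "n = Suc (Suc d)"
  shows "(\<Sum>k\<in>{1..n-1}. f k) = (\<Sum>i<d. f (Suc i)) + f (Suc d)"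
proof -
  have e: "{1..n-1} = Suc ` {..<d} \<union> {Suc d}"
  proof (rule set_eqI)
    fix k show "k \<in> {1..n-1} \<longleftrightarrow> k \<in> Suc ` {..<d} \<union> {Suc d}"
      using assms by (cases k) auto
  qed
  show ?thesis unfolding e by (subst sum.union_disjoint) (auto simp: sum.reindex)
qed

lemma amgm_sum:
  fixes s x :: "nat \<Rightarrow> real"
  assumes "\<alpha> > 0"
  shows "\<bar>\<Sum>i<d. s i * x i\<bar> \<le> (\<alpha> * (\<Sum>i<d. (s i)\<^sup>2) + (\<Sum>i<d. (x i)\<^sup>2) / \<alpha>) / 2"
proof -
  have t: "\<bar>s i * x i\<bar> \<le> (\<alpha> * (s i)\<^sup>2 + (x i)\<^sup>2 / \<alpha>) / 2" for i
  proof -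
    have "0 \<le> (\<alpha> * \<bar>s i\<bar> - \<bar>x i\<bar>)\<^sup>2" by simp
    hence "2 * \<alpha> * \<bar>s i * x i\<bar> \<le> \<alpha>\<^sup>2 * (s i)\<^sup>2 + (x i)\<^sup>2"
      by (simp add: power2_eq_square algebra_simps abs_mult)
    hence h: "\<bar>s i * x i\<bar> * (2 * \<alpha>) \<le> \<alpha>\<^sup>2 * (s i)\<^sup>2 + (x i)\<^sup>2" by (simp add: mult_ac)
    have e: "(\<alpha> * (s i)\<^sup>2 + (x i)\<^sup>2 / \<alpha>) / 2 = (\<alpha>\<^sup>2 * (s i)\<^sup>2 + (x i)\<^sup>2) / (2 * \<alpha>)"
      using assms by (simp add: field_simps power2_eq_square)
    show ?thesis unfolding e using h assms by (simp add: pos_le_divide_eq)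
  qed
  have "\<bar>\<Sum>i<d. s i * x i\<bar> \<le> (\<Sum>i<d. \<bar>s i * x i\<bar>)" by (rule sum_abs)
  also have "\<dots> \<le> (\<Sum>i<d. (\<alpha> * (s i)\<^sup>2 + (x i)\<^sup>2 / \<alpha>) / 2)" by (rule sum_mono) (rule t)
  also have "\<dots> = (\<alpha> * (\<Sum>i<d. (s i)\<^sup>2) + (\<Sum>i<d. (x i)\<^sup>2) / \<alpha>) / 2"
    by (induct d) (simp_all add: add_divide_distrib algebra_simps)
  finally show ?thesis .
qed

lemma tri_abs: fixes a b c :: real shows "\<bar>a\<bar> \<le> \<bar>a + b + c\<bar> + \<bar>b\<bar> + \<bar>c\<bar>"
  by (simp add: abs_if)

lemma small_case:
  fixes s x :: "nat \<Rightarrow> real"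
  assumes N: "N > 0" and W: "W \<ge> 0"
    and NN: "N\<^sup>2 = v0\<^sup>2 + (\<Sum>i<d. (x i)\<^sup>2) + W + vn\<^sup>2"
    and null: "2 * v0 * vn = (\<Sum>i<d. (x i)\<^sup>2) + W"
    and small: "\<bar>vn\<bar> < N / 50"
    and sQ: "(\<Sum>i<d. (s i)\<^sup>2) \<le> 1"
  shows "\<bar>v0 + (\<Sum>i<d. s i * x i) + (\<Sum>i<d. (s i)\<^sup>2) / 2 * vn\<bar> > N / 4"
proof -
  define X where "X = (\<Sum>i<d. (x i)\<^sup>2)"
  define Q where "Q = (\<Sum>i<d. (s i)\<^sup>2)"
  have X0: "X \<ge> 0" unfolding X_def by (simp add: sum_nonneg)
  have Q0: "Q \<ge> 0" unfolding Q_def by (simp add: sum_nonneg)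
  have "v0\<^sup>2 \<le> N\<^sup>2" using NN X0 W unfolding X_def by simp
  hence "\<bar>v0\<bar>\<^sup>2 \<le> N\<^sup>2" by simp
  from power2_le_imp_le[OF this] N have v0N: "\<bar>v0\<bar> \<le> N" by simp
  have "X + W = 2 * v0 * vn" using null unfolding X_def by simp
  also have "\<dots> \<le> \<bar>2 * v0 * vn\<bar>" by (rule abs_ge_self)
  also have "\<dots> = 2 * \<bar>v0\<bar> * \<bar>vn\<bar>" by (simp add: abs_mult)
  also have "\<dots> \<le> 2 * N * (N / 50)" using v0N small by (intro mult_mono) auto
  finally have XW: "X + W \<le> N\<^sup>2 / 25" by (simp add: power2_eq_square)
  have "\<bar>vn\<bar>\<^sup>2 \<le> (N/50)\<^sup>2" using small by (intro power_mono) simp_all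
  hence "vn\<^sup>2 \<le> (N/50)\<^sup>2" by simp
  moreover have "(97/100*N)\<^sup>2 = 9409/10000 * N\<^sup>2" by (simp add: power2_eq_square)
  moreover have "(N/50)\<^sup>2 = N\<^sup>2/2500" by (simp add: power2_eq_square)
  ultimately have "v0\<^sup>2 \<ge> (97/100 * N)\<^sup>2" using NN XW W X_def zero_le_power2[of N] by linarith
  hence "(97/100 * N)\<^sup>2 \<le> \<bar>v0\<bar>\<^sup>2" by simp
  from power2_le_imp_le[OF this abs_ge_zero] have v0b: "\<bar>v0\<bar> \<ge> 97/100 * N" .
  have "\<bar>\<Sum>i<d. s i * x i\<bar> \<le> ((N/5) * Q + X / (N/5)) / 2"
    unfolding Q_def X_def by (rule amgm_sum) (use N in simp)
  also have "\<dots> \<le> ((N/5) * 1 + (N\<^sup>2/25) / (N/5)) / 2"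
    using sQ XW X0 W N unfolding Q_def by (intro divide_right_mono add_mono mult_left_mono) auto
  also have "\<dots> = N / 5" using N by (simp add: power2_eq_square)
  finally have sx: "\<bar>\<Sum>i<d. s i * x i\<bar> \<le> N / 5" .
  have q1: "\<bar>vn\<bar> * Q \<le> \<bar>vn\<bar>" using mult_left_le[OF sQ[folded Q_def] abs_ge_zero] .
  have "\<bar>Q / 2 * vn\<bar> = (\<bar>vn\<bar> * Q) / 2" using Q0 by (simp add: abs_mult)
  hence "\<bar>Q / 2 * vn\<bar> \<le> 1 / 2 * (N / 50)" using q1 small by linarith
  thus ?thesis using v0b sx N tri_abs[of v0 "\<Sum>i<d. s i * x i" "(\<Sum>i<d. (s i)\<^sup>2) / 2 * vn"] unfolding Q_def by linarith
qed

lemma big_case: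
  fixes s x :: "nat \<Rightarrow> real"
  assumes vn: "vn \<noteq> 0" and W: "W \<ge> 0"
    and id: "2 * vn * P = (\<Sum>i<d. (vn * s i + x i)\<^sup>2) + W"
    and P: "\<bar>P\<bar> \<le> \<delta>" and i: "i < d"
  shows "(s i + x i / vn)\<^sup>2 \<le> 2 * \<delta> / \<bar>vn\<bar>"
proof -
  have "(vn * s i + x i)\<^sup>2 \<le> (\<Sum>i<d. (vn * s i + x i)\<^sup>2)"
    by (rule member_le_sum[where f="\<lambda>i. (vn * s i + x i)\<^sup>2"]) (use i in auto)
  also have "\<dots> \<le> 2 * vn * P" using id W by simp
  also have "\<dots> \<le> \<bar>2 * vn * P\<bar>" by (rule abs_ge_self)
  also have "\<dots> = 2 * \<bar>vn\<bar> * \<bar>P\<bar>" by (simp add: abs_mult)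
  also have "\<dots> \<le> 2 * \<bar>vn\<bar> * \<delta>" using P by (intro mult_left_mono) auto
  finally have a: "(vn * s i + x i)\<^sup>2 \<le> 2 * \<bar>vn\<bar> * \<delta>" .
  have "vn * s i + x i = vn * (s i + x i / vn)" using vn by (simp add: distrib_left)
  hence "(vn * s i + x i)\<^sup>2 = vn\<^sup>2 * (s i + x i / vn)\<^sup>2" by (simp add: power_mult_distrib)
  with a have "\<bar>vn\<bar>\<^sup>2 * (s i + x i / vn)\<^sup>2 \<le> \<bar>vn\<bar> * (2 * \<delta>)" by simp
  hence "\<bar>vn\<bar> * (\<bar>vn\<bar> * (s i + x i / vn)\<^sup>2) \<le> \<bar>vn\<bar> * (2 * \<delta>)" by (simp add: power2_eq_square mult.assoc)
  from mult_left_le_imp_le[OF this] vn have "\<bar>vn\<bar> * (s i + x i / vn)\<^sup>2 \<le> 2 * \<delta>" by simp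
  hence "(s i + x i / vn)\<^sup>2 * \<bar>vn\<bar> \<le> 2 * \<delta>" by (simp only: mult.commute)
  moreover have "0 < \<bar>vn\<bar>" using vn by simp
  ultimately show ?thesis by (simp only: pos_le_divide_eq)
qed

lemma ident:
  fixes s x :: "nat \<Rightarrow> real"
  assumes null: "2 * v0 * vn = (\<Sum>i<d. (x i)\<^sup>2) + W"
  shows "2 * vn * (v0 + (\<Sum>i<d. s i * x i) + (\<Sum>i<d. (s i)\<^sup>2) / 2 * vn) = (\<Sum>i<d. (vn * s i + x i)\<^sup>2) + W"
proof -
  have t: "(vn * s i + x i)\<^sup>2 = vn\<^sup>2 * (s i)\<^sup>2 + 2 * vn * (s i * x i) + (x i)\<^sup>2" for i
    by (simp add: power2_sum power_mult_distrib mult_ac)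
  have e: "(\<Sum>i<d. (vn * s i + x i)\<^sup>2) = vn\<^sup>2 * (\<Sum>i<d. (s i)\<^sup>2) + 2 * vn * (\<Sum>i<d. s i * x i) + (\<Sum>i<d. (x i)\<^sup>2)"
    unfolding t by (simp add: sum.distrib sum_distrib_left)
  have ab: "2 * vn * (v0 + A + Q / 2 * vn) = vn\<^sup>2 * Q + 2 * vn * A + X + W"
    if "2 * v0 * vn = X + W" for A Q X :: real
    using that by (simp add: algebra_simps power2_eq_square)
  show ?thesis unfolding e using ab[OF null] by simp
qed

lemma fmeas_of_pos:
  assumes "A \<in> sets M" "measure M A > 0"
  shows "A \<in> fmeasurable M"
proof (rule fmeasurableI[OF assms(1)])
  show "emeasure M A < \<infinity>"
  proof (rule ccontr)
    assume "\<not> emeasure M A < \<infinity>"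
    hence "emeasure M A = \<infinity>" by (simp add: not_less top_unique)
    hence "measure M A = 0" by (simp add: measure_def)
    with assms(2) show False by simp
  qed
qed

theorem lemma5p1:
  fixes n :: nat
  assumes "n \<ge> 3"
  shows "\<exists>C::real. \<forall>(\<eta>::real) (B::(nat \<Rightarrow> real) set) (\<rho>::real) (t::real) (v::nat \<Rightarrow> real).
           \<eta> > 0 \<longrightarrow> (\<exists>c r. B = ballU n c r) \<longrightarrow> B \<subseteq> B1U n \<longrightarrow> volU n B \<ge> \<eta> \<longrightarrow>
           \<rho> > 0 \<longrightarrow> v \<in> orbit_e1 n \<longrightarrow>
           volU n {s \<in> B. vnorm n (mv n (mm n (a_t n t) (u_s n s)) v)
                            \<le> exp t * \<eta>\<^sup>2 * \<rho>\<^sup>2 * vnorm n v}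
             \<le> C * \<rho> * volU n B"
proof -
  define d where "d = n - 2"
  have nd: "n = Suc (Suc d)" using assms unfolding d_def by simp
  have d1: "d \<ge> 1" using assms unfolding d_def by simp
  define m0 where "m0 = measure (lebU n) (B1U n)"
  define C where "C = 2 + 20^d / m0"
  show ?thesis
  proof (rule exI[of _ C], intro allI impI)
    fix \<eta> :: real and B :: "(nat \<Rightarrow> real) set" and \<rho> t :: real and v :: "nat \<Rightarrow> real"
    assume \<eta>: "\<eta> > 0" and Bb: "\<exists>c r. B = ballU n c r" and BB1: "B \<subseteq> B1U n"
      and vol: "volU n B \<ge> \<eta>" and \<rho>: "\<rho> > 0" and vo: "v \<in> orbit_e1 n"
    define S where "S = {s \<in> B. vnorm n (mv n (mm n (a_t n t) (u_s n s)) v)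
                            \<le> exp t * \<eta>\<^sup>2 * \<rho>\<^sup>2 * vnorm n v}"
    have volB: "volU n B = measure (lebU n) B / m0" unfolding volU_def m0_def ..
    have volS: "volU n S = measure (lebU n) S / m0" unfolding volU_def m0_def ..
    have m0nn: "m0 \<ge> 0" unfolding m0_def by simp
    have m0pos: "m0 > 0"
    proof (rule ccontr)
      assume "\<not> m0 > 0" hence "m0 = 0" using m0nn by simp
      hence "volU n B = 0" using volB by simp
      thus False using vol \<eta> by simp
    qed
    have mBpos: "measure (lebU n) B > 0"
    proof -
      have "0 < volU n B" using vol \<eta> by simp
      thus ?thesis using volB m0pos by (simp add: zero_less_divide_iff)
    qed
    have Bsets: "B \<in> sets (lebU n)" using Bb ballU_sets by blast
    have Bfm: "B \<in> fmeasurable (lebU n)" by (rule fmeas_of_pos[OF Bsets mBpos])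
    have B1fm: "B1U n \<in> fmeasurable (lebU n)"
      using fmeas_of_pos[OF _ m0pos[unfolded m0_def]] ballU_sets unfolding B1U_def by blast
    have "measure (lebU n) B \<le> m0" unfolding m0_def
      by (rule measure_mono_fmeasurable[OF BB1 Bsets B1fm])
    hence volB1: "volU n B \<le> 1" using volB m0pos by simp
    hence \<eta>1: "\<eta> \<le> 1" using vol by simp
    have volBnn: "volU n B \<ge> 0" using vol \<eta> by simp
    have SB: "S \<subseteq> B" unfolding S_def by auto
    have mSB: "measure (lebU n) S \<le> measure (lebU n) B" by (rule measure_le_sub[OF SB Bfm])
    have Cge: "C \<ge> 2" unfolding C_def using m0pos by simp
    have "volU n S \<le> C * \<rho> * volU n B"
    proof (cases "\<eta> * \<rho> \<ge> 1/2")
      case True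
      have "volU n S \<le> volU n B" using volS volB mSB m0pos by (simp add: divide_right_mono)
      also have "\<dots> \<le> (2 * \<rho>) * volU n B"
      proof -
        have "1/2 \<le> \<eta> * \<rho>" by (rule True)
        also have "\<dots> \<le> 1 * \<rho>" using \<eta>1 \<rho> by (intro mult_right_mono) auto
        finally have "1 \<le> 2 * \<rho>" by simp
        from mult_right_mono[OF this volBnn] show ?thesis by simp
      qed
      also have "\<dots> \<le> (C * \<rho>) * volU n B" using Cge \<rho> volBnn by (intro mult_right_mono) auto
      finally show ?thesis by simp
    next
      case False
      hence er: "\<eta> * \<rho> < 1/2" by simp
      have er0: "\<eta> * \<rho> > 0" using \<eta> \<rho> by simp
      define N where "N = vnorm n v"
      have N: "N > 0" unfolding N_def by (rule vnorm_pos[OF orbit_nz[OF vo]])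
      define x where "x = (\<lambda>i. v (Suc i))"
      define W where "W = (v (Suc d))\<^sup>2"
      have W: "W \<ge> 0" unfolding W_def by simp
      have Q0v: "Q0 n v = 0" using orbit_Q0[OF vo] assms by simp
      have null: "2 * v 0 * v n = (\<Sum>i<d. (x i)\<^sup>2) + W"
        using Q0v Q0_split[OF nd, of "\<lambda>k. (v k)\<^sup>2"] unfolding Q0_def x_def W_def by simp
      have NN: "N\<^sup>2 = (v 0)\<^sup>2 + (\<Sum>i<d. (x i)\<^sup>2) + W + (v n)\<^sup>2"
        using vnorm_sq[of n v] sum_split[OF nd, of "\<lambda>k. (v k)\<^sup>2"] unfolding N_def x_def W_def
        by (simp add: nd)
      define P where "P = (\<lambda>s. v 0 + (\<Sum>i<d. s i * x i) + (\<Sum>i<d. (s i)\<^sup>2) / 2 * v n)"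
      have PS: "\<bar>P s\<bar> \<le> \<eta>\<^sup>2 * \<rho>\<^sup>2 * N" if s: "s \<in> S" for s
      proof -
        have "mv n (mm n (a_t n t) (u_s n s)) v 0 = exp t * P s"
          unfolding comp0[OF assms] P_def x_def d_def by simp
        hence "exp t * \<bar>P s\<bar> \<le> vnorm n (mv n (mm n (a_t n t) (u_s n s)) v)"
          using comp0_le[of "mv n (mm n (a_t n t) (u_s n s)) v" n] by (simp add: abs_mult)
        also have "\<dots> \<le> exp t * (\<eta>\<^sup>2 * \<rho>\<^sup>2 * N)" using s unfolding S_def N_def by (simp add: mult.assoc)
        finally show ?thesis by simp
      qed
      have sq: "(\<eta> * \<rho>)\<^sup>2 < 1/4"
      proof -
        have "(\<eta> * \<rho>)\<^sup>2 < (1/2)\<^sup>2" using er er0 by (intro power_strict_mono) auto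
        thus ?thesis by (simp add: power2_eq_square)
      qed
      show ?thesis
      proof (cases "\<bar>v n\<bar> < N / 50")
        case True
        have "S = {}"
        proof (rule ccontr)
          assume "S \<noteq> {}"
          then obtain s where s: "s \<in> S" by auto
          have "s \<in> B1U n" using s SB BB1 by auto
          hence "sqrt (\<Sum>i<d. (s i)\<^sup>2) \<le> 1" unfolding B1U_def ballU_def d_def by simp
          hence sQ: "(\<Sum>i<d. (s i)\<^sup>2) \<le> 1" by simp
          have "N / 4 < \<bar>P s\<bar>" unfolding P_def by (rule small_case[OF N W NN null True sQ])
          also have "\<dots> \<le> (\<eta> * \<rho>)\<^sup>2 * N" using PS[OF s] by (simp add: power_mult_distrib)
          also have "\<dots> \<le> 1/4 * N" using sq N by (intro mult_right_mono) auto
          finally show False by simp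
        qed
        hence "volU n S = 0" using volS by simp
        also have "0 \<le> C * \<rho> * volU n B" using Cge \<rho> volBnn by simp
        finally show ?thesis .
      next
        case False
        hence vnb: "\<bar>v n\<bar> \<ge> N / 50" by simp
        hence vn0: "v n \<noteq> 0" using N by auto
        define r where "r = 10 * (\<eta> * \<rho>)"
        define a where "a = (\<lambda>i. - x i / v n)"
        have r0: "r \<ge> 0" unfolding r_def using er0 by simp
        have Scube: "S \<subseteq> PiE {..<n-2} (\<lambda>i. {a i - r .. a i + r})"
        proof
          fix s assume s: "s \<in> S"
          have sP: "s \<in> PiE {..<n-2} (\<lambda>_. UNIV)" using s SB Bb unfolding ballU_def by auto
          have hi: "\<bar>s i - a i\<bar> \<le> r" if i: "i < d" for i
          proof -
            have id: "2 * v n * P s = (\<Sum>i<d. (v n * s i + x i)\<^sup>2) + W"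
              unfolding P_def by (rule ident[OF null])
            have "(s i + x i / v n)\<^sup>2 \<le> 2 * (\<eta>\<^sup>2 * \<rho>\<^sup>2 * N) / \<bar>v n\<bar>"
              by (rule big_case[OF vn0 W id PS[OF s] i])
            also have "\<dots> \<le> 2 * (\<eta>\<^sup>2 * \<rho>\<^sup>2 * N) / (N / 50)"
              using vnb N by (intro divide_left_mono) (auto intro!: mult_nonneg_nonneg)
            also have "\<dots> = r\<^sup>2" unfolding r_def using N by (simp add: power2_eq_square field_simps)
            finally have "\<bar>s i + x i / v n\<bar>\<^sup>2 \<le> r\<^sup>2" by simp
            from power2_le_imp_le[OF this r0] show ?thesis unfolding a_def by simp
          qed
          have b: "s i \<in> {a i - r .. a i + r}" if "i < n-2" for i
            using hi[of i] that unfolding d_def by (auto simp: abs_le_iff)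
          show "s \<in> PiE {..<n-2} (\<lambda>i. {a i - r .. a i + r})"
            using sP b by (auto simp: PiE_iff)
        qed
        have cfm: "PiE {..<n-2} (\<lambda>i. {a i - r .. a i + r}) \<in> fmeasurable (lebU n)"
          using cube_sets cube_meas[OF r0] by (intro fmeasurableI) auto
        have "measure (lebU n) S \<le> measure (lebU n) (PiE {..<n-2} (\<lambda>i. {a i - r .. a i + r}))"
          by (rule measure_le_sub[OF Scube cfm])
        also have "\<dots> = (2 * r)^d"
          using cube_meas[OF r0, of n a] r0 unfolding d_def by (simp add: measure_def)
        also have "\<dots> = 20^d * (\<eta> * \<rho>)^d" unfolding r_def by (simp add: power_mult_distrib)
        also have "\<dots> \<le> 20^d * (\<eta> * \<rho>)^1"
          using er er0 d1 by (intro mult_left_mono power_decreasing) auto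
        also have "\<dots> \<le> 20^d * (volU n B * \<rho>)" using vol \<rho> by (intro mult_left_mono mult_right_mono) auto
        finally have "measure (lebU n) S \<le> 20^d * (volU n B * \<rho>)" .
        hence "volU n S \<le> 20^d * (volU n B * \<rho>) / m0" using volS m0pos by (simp add: divide_right_mono)
        also have "\<dots> = (20^d / m0) * \<rho> * volU n B" by simp
        also have "\<dots> \<le> C * \<rho> * volU n B"
          unfolding C_def using \<rho> volBnn by (intro mult_right_mono) auto
        finally show ?thesis .
      qed
    qed
    thus "volU n {s \<in> B. vnorm n (mv n (mm n (a_t n t) (u_s n s)) v)
                            \<le> exp t * \<eta>\<^sup>2 * \<rho>\<^sup>2 * vnorm n v}
             \<le> C * \<rho> * volU n B" unfolding S_def .
  qed
qed

end
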